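(* Let $m$ be a positive integer and let $Y \subseteq \mathbb{P}(\mathbb{C}^2\otimes\mathbb{C}^2\otimes\mathbb{C}^{m+1})$ be the Segre variety, i.e. the image of $\mathbb{P}(\mathbb{C}^2)\times\mathbb{P}(\mathbb{C}^2)\times\mathbb{P}(\mathbb{C}^{m+1}) \to \mathbb{P}(\mathbb{C}^2\otimes\mathbb{C}^2\otimes\mathbb{C}^{m+1})$, $[u]\times[v]\times[w]\mapsto[u\otimes v\otimes w]$. There exists a linear subspace $L \subseteq \mathbb{P}(\mathbb{C}^2\otimes\mathbb{C}^2\otimes\mathbb{C}^{m+1})$ of codimension $2m+5$ with $L \cap \sigma_2^\circ(Y) = \emptyset$ such that \[L \cap \sigma_2(Y) = L_1 \sqcup L_2,\] where $L_1, L_2 \subseteq \sigma_2(Y)\setminus\sigma_2^\circ(Y)$ are disjoint linear subspaces spanning $L$.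
   Context: For a subvariety $Y \subseteq \mathbb{P}(V)$, the secant locus is $\sigma_2^\circ(Y) := \bigcup_{p,q \in Y}\langle p,q\rangle$, where $\langle p,q\rangle$ is the linear span of $p$ and $q$ (so $\langle p,p\rangle = \{p\}$); the secant variety $\sigma_2(Y)$ is its Zariski closure. *)

theory Defs
  imports "HOL-Analysis.Analysis" "HOL-Library.Function_Algebras"
begin

text \<open>Tensors in C^2 (x) C^2 (x) C^(m+1) are represented as functions on index triples
  (i,j,k), with i,j < 2 and k \<le> m, extended by zero outside this range.
  Projective subvarieties / linear subspaces of P(V) are represented by their affine
  cones in V (so the empty projective set corresponds to {0}).\<close>

type_synonym tensor = "nat \<times> nat \<times> nat \<Rightarrow> complex"

definition tscale :: "complex \<Rightarrow> tensor \<Rightarrow> tensor" where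
  "tscale c T = (\<lambda>x. c * T x)"

lemma vector_space_tscale: "vector_space tscale"
  by unfold_locales (auto simp: tscale_def algebra_simps fun_eq_iff)

abbreviation csubspace :: "tensor set \<Rightarrow> bool" where
  "csubspace \<equiv> module.subspace tscale"

abbreviation cspan :: "tensor set \<Rightarrow> tensor set" where
  "cspan \<equiv> module.span tscale"

abbreviation cdim :: "tensor set \<Rightarrow> nat" where
  "cdim \<equiv> vector_space.dim tscale"

definition tspace :: "nat \<Rightarrow> tensor set" where
  "tspace m = {T. \<forall>i j k. \<not> (i < 2 \<and> j < 2 \<and> k \<le> m) \<longrightarrow> T (i, j, k) = 0}"

definition segre_cone :: "nat \<Rightarrow> tensor set" where
  "segre_cone m = {T. \<exists>u v w :: nat \<Rightarrow> complex.
      T = (\<lambda>(i, j, k). if i < 2 \<and> j < 2 \<and> k \<le> m then u i * v j * w k else 0)}"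

definition secant_locus_cone :: "tensor set \<Rightarrow> tensor set" where
  "secant_locus_cone Y = (\<Union>p\<in>Y. \<Union>q\<in>Y. cspan {p, q})"

inductive_set polyfun :: "(tensor \<Rightarrow> complex) set" where
  pconst: "(\<lambda>_. c) \<in> polyfun"
| pcoord: "(\<lambda>T. T x) \<in> polyfun"
| padd: "p \<in> polyfun \<Longrightarrow> q \<in> polyfun \<Longrightarrow> (\<lambda>T. p T + q T) \<in> polyfun"
| pmult: "p \<in> polyfun \<Longrightarrow> q \<in> polyfun \<Longrightarrow> (\<lambda>T. p T * q T) \<in> polyfun"

definition zariski_closure :: "tensor set \<Rightarrow> tensor set \<Rightarrow> tensor set" where
  "zariski_closure V S = {x \<in> V. \<forall>p\<in>polyfun. (\<forall>s\<in>S. p s = 0) \<longrightarrow> p x = 0}"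

end

theory Submission
  imports Defs
begin


interpretation T: vector_space tscale by (rule vector_space_tscale)

lemma sum_fun_app: "(sum f A) x = (\<Sum>a\<in>A. f a x)" for f :: "'b \<Rightarrow> 'c \<Rightarrow> 'd::comm_monoid_add"
  by (induction A rule: infinite_finite_induct) auto

lemma cspan2: "cspan {p,q} = {x. \<exists>a b. x = (\<lambda>z. a * p z + b * q z)}"
  unfolding T.span_insert T.span_singleton
  apply (auto simp: tscale_def fun_eq_iff)
   apply (metis add_diff_cancel_left' diff_add_cancel)
  by (metis add_diff_cancel_left')

definition seg :: "nat \<Rightarrow> (nat \<Rightarrow> complex) \<Rightarrow> (nat \<Rightarrow> complex) \<Rightarrow> (nat \<Rightarrow> complex) \<Rightarrow> tensor" where
  "seg m u v w = (\<lambda>(i, j, k). if i < 2 \<and> j < 2 \<and> k \<le> m then u i * v j * w k else 0)"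

lemma segre_cone_seg: "segre_cone m = {T. \<exists>u v w. T = seg m u v w}"
  unfolding segre_cone_def seg_def by auto

lemma S2o_elim:
  assumes "X \<in> secant_locus_cone (segre_cone m)"
  obtains a b u v w u2 v2 w2 where "X = (\<lambda>z. a * seg m u v w z + b * seg m u2 v2 w2 z)"
  using assms unfolding secant_locus_cone_def segre_cone_seg cspan2 by auto

lemma S2o_intro:
  "(\<lambda>z. a * seg m u v w z + b * seg m u2 v2 w2 z) \<in> secant_locus_cone (segre_cone m)"
  unfolding secant_locus_cone_def segre_cone_seg cspan2 by blast

lemma zero_S2o: "0 \<in> secant_locus_cone (segre_cone m)"
  using S2o_intro[of 0 m _ _ _ 0] by (simp add: zero_fun_def)

lemma pscale: "p \<in> polyfun \<Longrightarrow> (\<lambda>T. c * p T) \<in> polyfun"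
  using polyfun.pmult[OF polyfun.pconst] by auto
lemma pminus: "p \<in> polyfun \<Longrightarrow> q \<in> polyfun \<Longrightarrow> (\<lambda>T. p T - q T) \<in> polyfun"
proof -
  assume "p \<in> polyfun" "q \<in> polyfun"
  then have "(\<lambda>T. p T + (-1) * q T) \<in> polyfun" by (intro polyfun.padd pscale)
  then show ?thesis by simp
qed

definition det3 :: "complex \<Rightarrow> complex \<Rightarrow> complex \<Rightarrow> complex \<Rightarrow> complex \<Rightarrow> complex \<Rightarrow> complex \<Rightarrow> complex \<Rightarrow> complex \<Rightarrow> complex" where
 "det3 a b c d e f g h i = a*e*i - a*f*h - b*d*i + b*f*g + c*d*h - c*e*g"

lemma det3_rank2: "det3 (P1*Q1+R1*S1) (P1*Q2+R1*S2) (P1*Q3+R1*S3) (P2*Q1+R2*S1) (P2*Q2+R2*S2) (P2*Q3+R2*S3) (P3*Q1+R3*S1) (P3*Q2+R3*S2) (P3*Q3+R3*S3) = 0"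
  unfolding det3_def by algebra

lemma det3_tri:
  fixes e1 e2 e3 :: nat
  assumes "e1 \<noteq> e2" "e1 \<noteq> e3" "e2 \<noteq> e3"
    "\<And>k. k > e1 \<Longrightarrow> R1 k = 0" "\<And>k. k > e2 \<Longrightarrow> R2 k = 0" "\<And>k. k > e3 \<Longrightarrow> R3 k = 0"
  shows "det3 (R1 e1) (R1 e2) (R1 e3) (R2 e1) (R2 e2) (R2 e3) (R3 e1) (R3 e2) (R3 e3) = R1 e1 * R2 e2 * R3 e3"
proof -
  have "e1 < e2 \<or> e2 < e1" "e1 < e3 \<or> e3 < e1" "e2 < e3 \<or> e3 < e2" using assms(1-3) by auto
  then show ?thesis unfolding det3_def
  proof (elim disjE)
  qed (simp_all add: assms(4-6))
qed

lemma det3_poly: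
  assumes "a \<in> polyfun" "b \<in> polyfun" "c \<in> polyfun" "d \<in> polyfun" "e \<in> polyfun" "f \<in> polyfun" "g \<in> polyfun" "h \<in> polyfun" "i \<in> polyfun"
  shows "(\<lambda>X. det3 (a X) (b X) (c X) (d X) (e X) (f X) (g X) (h X) (i X)) \<in> polyfun"
  unfolding det3_def using assms by (intro pminus polyfun.padd polyfun.pmult)

definition rho :: "(nat \<times> nat \<Rightarrow> complex) \<Rightarrow> tensor \<Rightarrow> nat \<Rightarrow> complex" where
  "rho \<phi> X k = \<phi>(0,0) * X(0,0,k) + \<phi>(0,1) * X(0,1,k) + \<phi>(1,0) * X(1,0,k) + \<phi>(1,1) * X(1,1,k)"

lemma rho_poly: "(\<lambda>X. rho \<phi> X k) \<in> polyfun"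
  unfolding rho_def by (intro polyfun.padd polyfun.pmult polyfun.pconst polyfun.pcoord)

definition minorp where
  "minorp \<phi>1 \<phi>2 \<phi>3 e1 e2 e3 X = det3 (rho \<phi>1 X e1) (rho \<phi>1 X e2) (rho \<phi>1 X e3)
     (rho \<phi>2 X e1) (rho \<phi>2 X e2) (rho \<phi>2 X e3) (rho \<phi>3 X e1) (rho \<phi>3 X e2) (rho \<phi>3 X e3)"

lemma minorp_poly: "minorp \<phi>1 \<phi>2 \<phi>3 e1 e2 e3 \<in> polyfun"
  unfolding minorp_def[abs_def] by (intro det3_poly rho_poly)

lemma rho_seg2:
  assumes "k \<le> m"
  shows "rho \<phi> (\<lambda>z. a * seg m u v w z + b * seg m u2 v2 w2 z) k =
    (a * (\<phi>(0,0)*u 0* v 0 + \<phi>(0,1)*u 0* v 1 + \<phi>(1,0)*u 1* v 0 + \<phi>(1,1)*u 1* v 1)) * w k +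
    (b * (\<phi>(0,0)*u2 0* v2 0 + \<phi>(0,1)*u2 0* v2 1 + \<phi>(1,0)*u2 1* v2 0 + \<phi>(1,1)*u2 1* v2 1)) * w2 k"
  using assms unfolding rho_def seg_def by (simp add: algebra_simps)

lemma minorp_S2o:
  assumes "X \<in> secant_locus_cone (segre_cone m)" "e1 \<le> m" "e2 \<le> m" "e3 \<le> m"
  shows "minorp \<phi>1 \<phi>2 \<phi>3 e1 e2 e3 X = 0"
proof -
  obtain a b u v w u2 v2 w2 where X: "X = (\<lambda>z. a * seg m u v w z + b * seg m u2 v2 w2 z)"
    using assms(1) by (rule S2o_elim)
  show ?thesis unfolding minorp_def X rho_seg2[OF assms(2)] rho_seg2[OF assms(3)] rho_seg2[OF assms(4)]
    by (rule det3_rank2)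
qed

definition tang :: "nat \<Rightarrow> (nat \<Rightarrow> complex) \<Rightarrow> (nat \<Rightarrow> complex) \<Rightarrow> (nat \<Rightarrow> complex) \<Rightarrow> (nat \<Rightarrow> complex) \<Rightarrow> (nat \<Rightarrow> complex) \<Rightarrow> (nat \<Rightarrow> complex) \<Rightarrow> complex \<Rightarrow> tensor" where
  "tang m U U2 V V2 W W2 t = (\<lambda>(i, j, k). if i < 2 \<and> j < 2 \<and> k \<le> m then
     U2 i * V j * W k + U i * V2 j * W k + U i * V j * W2 k
     + t * (U2 i * V2 j * W k + U2 i * V j * W2 k + U i * V2 j * W2 k) + t^2 * (U2 i * V2 j * W2 k) else 0)"

lemma tang_S2o:
  assumes "t \<noteq> 0"
  shows "tang m U U2 V V2 W W2 t \<in> secant_locus_cone (segre_cone m)"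
proof -
  have "tang m U U2 V V2 W W2 t = (\<lambda>z. (1/t) * seg m (\<lambda>i. U i + t * U2 i) (\<lambda>i. V i + t * V2 i) (\<lambda>i. W i + t * W2 i) z
       + (-1/t) * seg m U V W z)"
    using assms by (auto simp: fun_eq_iff tang_def seg_def field_simps power2_eq_square)
  then show ?thesis using S2o_intro by metis
qed

lemma polyfun_cont:
  assumes "p \<in> polyfun" "\<And>z. isCont (\<lambda>t. G t z) a"
  shows "isCont (\<lambda>t. p (G t)) a"
  using assms(1) by induction (auto intro: assms(2))

lemma tang_closure:
  "tang m U U2 V V2 W W2 0 \<in> zariski_closure (tspace m) (secant_locus_cone (segre_cone m))"
  unfolding zariski_closure_def
proof (intro CollectI conjI ballI impI)
  show "tang m U U2 V V2 W W2 0 \<in> tspace m" unfolding tspace_def tang_def by auto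
  fix p assume p: "p \<in> polyfun" and van: "\<forall>s\<in>secant_locus_cone (segre_cone m). p s = 0"
  have c: "isCont (\<lambda>t. p (tang m U U2 V V2 W W2 t)) 0"
  proof (rule polyfun_cont[OF p])
    fix z :: "nat \<times> nat \<times> nat"
    obtain i j k where z: "z = (i,j,k)" by (cases z) auto
    show "isCont (\<lambda>t. tang m U U2 V V2 W W2 t z) 0"
      unfolding z tang_def by (cases "i < 2 \<and> j < 2 \<and> k \<le> m") (auto intro!: continuous_intros)
  qed
  then have l1: "(\<lambda>t. p (tang m U U2 V V2 W W2 t)) \<midarrow>0\<rightarrow> p (tang m U U2 V V2 W W2 0)"
    by (simp add: isCont_def)
  have l2: "(\<lambda>t. p (tang m U U2 V V2 W W2 t)) \<midarrow>0\<rightarrow> 0"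
    by (subst LIM_equal[where g = "\<lambda>_. 0"]) (auto simp: van tang_S2o)
  show "p (tang m U U2 V V2 W W2 0) = 0" using LIM_unique[OF l1 l2] .
qed



lemma wI: fixes A B C D u0 u1 v0 v1 p0 p1 q0 q1 xs xr :: complex
 assumes "xs = A*u0* v0 + B*p0*q0" "0 = A*u0* v1 + B*p0*q1" "0 = A*u1* v0 + B*p1*q0" "xs = A*u1* v1 + B*p1*q1"
 "0 = C*u0* v0 + D*p0*q0" "xr = C*u0* v1 + D*p0*q1" "0 = C*u1* v0 + D*p1*q0" "0 = C*u1* v1+D*p1*q1" "xs \<noteq> 0" "xr \<noteq> 0" shows False
proof -
  define k where "k = (u0*p1 - u1*p0)*(v0*q1 - v1*q0)"
  have e1: "xs*xs = A*B*k" unfolding k_def using assms(1-4) by algebra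
  have e2: "0 = C*D*k" unfolding k_def using assms(5-8) by algebra
  have "C*D = 0" using e1 e2 assms(9) by auto
  then consider "C = 0" | "D = 0" by auto
  then show False
  proof cases
    case 1
    then have "D*p0*q1 = xr" "D*p1*q1 = 0" "D*p0*q0 = 0" using assms by auto
    then have "p1 = 0" "q0 = 0" using assms(10) by auto
    then show False using e1 assms(3,9) unfolding k_def by (auto simp: algebra_simps)
  next
    case 2
    then have "C*u0* v1 = xr" "C*u1* v1 = 0" "C*u0* v0 = 0" using assms by auto
    then have "u1 = 0" "v0 = 0" using assms(10) by auto
    then show False using e1 assms(3,9) unfolding k_def by (auto simp: algebra_simps)
  qed
qed

lemma wII: fixes A B C D ua ub va vb pa pb qa qb xs xr :: complex
 assumes "0 = A*ua* va + B*pa*qa" "0 = A*ua* vb + B*pa*qb" "xs = A*ub* va + B*pb*qa" "0 = A*ub* vb + B*pb*qb"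
 "xr = C*ua* va + D*pa*qa" "0 = C*ua* vb + D*pa*qb" "0 = C*ub* va + D*pb*qa" "-xr = C*ub* vb+D*pb*qb" "xs \<noteq> 0" "xr \<noteq> 0" shows False
proof -
  define k where "k = (ua*pb - ub*pa)*(va*qb - vb*qa)"
  have e1: "-(xr*xr) = C*D*k" unfolding k_def using assms(5-8) by algebra
  have e2: "0 = A*B*k" unfolding k_def using assms(1-4) by algebra
  have "A*B = 0" using e1 e2 assms(10) by auto
  then consider "A = 0" | "B = 0" by auto
  then show False
  proof cases
    case 1
    then have "B*pb*qa = xs" "B*pa*qa = 0" "B*pb*qb = 0" using assms by auto
    then have "pa = 0" "qb = 0" using assms(9) by auto
    then show False using e1 assms(6,10) unfolding k_def by (auto simp: algebra_simps)
  next
    case 2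
    then have "A*ub* va = xs" "A*ua* va = 0" "A*ub* vb = 0" using assms by auto
    then have "ua = 0" "vb = 0" using assms(9) by auto
    then show False using e1 assms(6,10) unfolding k_def by (auto simp: algebra_simps)
  qed
qed

definition X1 :: "nat \<Rightarrow> (nat \<Rightarrow> complex) \<Rightarrow> tensor" where
  "X1 m x = (\<lambda>(i,j,k). if i<2 \<and> j<2 \<and> k\<le>m then
     (if i = j then (if k<m then x k else 0) else if i = 0 then (if 1 \<le> k then x (k-1) else 0) else 0) else 0)"

definition X2 :: "nat \<Rightarrow> (nat \<Rightarrow> complex) \<Rightarrow> tensor" where
  "X2 m y = (\<lambda>(i,j,k). if i<2 \<and> j<2 \<and> k\<le>m then
     (if i=0 \<and> j=0 then (if 2\<le>k then y (k-2) else 0) else if i=1 \<and> j=1 then (if 2\<le>k then - y (k-2) else 0)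
      else if i=1 then (if k<m-1 then y k else 0) else 0) else 0)"

lemma X1_tang: "X1 m x = tang m (\<lambda>i. if i=0 then 1 else 0) (\<lambda>i. if i=1 then 1 else 0)
   (\<lambda>i. if i=1 then 1 else 0) (\<lambda>i. if i=0 then 1 else 0)
   (\<lambda>k. if k<m then x k else 0) (\<lambda>k. if 1 \<le> k then x (k-1) else 0) 0"
  unfolding X1_def tang_def by (auto simp: fun_eq_iff less_2_cases_iff)

lemma X2_tang: "X2 m y = tang m (\<lambda>i. if i=1 then 1 else 0) (\<lambda>i. if i=0 then 1 else 0)
   (\<lambda>i. if i=0 then 1 else 0) (\<lambda>i. if i=1 then -1 else 0)
   (\<lambda>k. if 2 \<le> k then y (k-2) else 0) (\<lambda>k. if k<m-1 then y k else 0) 0"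
  unfolding X2_def tang_def by (auto simp: fun_eq_iff less_2_cases_iff)

lemma X1_S2: "X1 m x \<in> zariski_closure (tspace m) (secant_locus_cone (segre_cone m))"
  unfolding X1_tang by (rule tang_closure)
lemma X2_S2: "X2 m y \<in> zariski_closure (tspace m) (secant_locus_cone (segre_cone m))"
  unfolding X2_tang by (rule tang_closure)

lemma X1_zero: "(\<forall>t<m. x t = 0) \<Longrightarrow> X1 m x = 0"
  unfolding X1_def by (auto simp: fun_eq_iff)
lemma X2_zero: "(\<forall>t<m-1. y t = 0) \<Longrightarrow> X2 m y = 0"
  unfolding X2_def by (auto simp: fun_eq_iff)

lemma X1_in: "X1 m x \<in> tspace m" unfolding X1_def tspace_def by auto
lemma X2_in: "X2 m y \<in> tspace m" unfolding X2_def tspace_def by auto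

lemma seg_val: "i < 2 \<Longrightarrow> j < 2 \<Longrightarrow> k \<le> m \<Longrightarrow> seg m u v w (i,j,k) = u i * v j * w k"
  unfolding seg_def by auto

lemma X1_notS2o:
  assumes "\<exists>t<m. x t \<noteq> 0"
  shows "X1 m x \<notin> secant_locus_cone (segre_cone m)"
proof
  assume "X1 m x \<in> secant_locus_cone (segre_cone m)"
  then obtain a b u v w u2 v2 w2 where X: "X1 m x = (\<lambda>z. a * seg m u v w z + b * seg m u2 v2 w2 z)"
    by (rule S2o_elim)
  have E: "X1 m x (i,j,k) = (a * w k) * u i * v j + (b * w2 k) * u2 i * v2 j"
    if "i<2" "j<2" "k\<le>m" for i j k
    using fun_cong[OF X, of "(i,j,k)"] that by (simp add: seg_val mult_ac)
  define s where "s = (LEAST t. t<m \<and> x t \<noteq> 0)"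
  have s: "s < m" "x s \<noteq> 0" using LeastI_ex[OF assms] unfolding s_def by auto
  have s2: "x t = 0" if "t < s" for t using not_less_Least[of t "\<lambda>t. t<m \<and> x t \<noteq> 0"] that s(1)
    unfolding s_def by auto
  define r where "r = Max {t. t<m \<and> x t \<noteq> 0}"
  have fin: "finite {t. t<m \<and> x t \<noteq> 0}" by auto
  have r: "r < m" "x r \<noteq> 0" using Max_in[OF fin] assms unfolding r_def by auto
  have r2: "x t = 0" if "r < t" "t < m" for t
  proof (rule ccontr)
    assume "x t \<noteq> 0"
    then have "t \<le> r" using Max_ge[OF fin, of t] that unfolding r_def by auto
    then show False using that by auto
  qed
  have a1: "X1 m x (0,0,s) = x s" "X1 m x (0,1,s) = 0" "X1 m x (1,0,s) = 0" "X1 m x (1,1,s) = x s"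
    using s s2[of "s-1"] unfolding X1_def by auto
  have a2: "X1 m x (0,0,r+1) = 0" "X1 m x (0,1,r+1) = x r" "X1 m x (1,0,r+1) = 0" "X1 m x (1,1,r+1) = 0"
    using r r2[of "r+1"] unfolding X1_def by auto
  show False
    apply (rule wI[of "x s" "a * w s" "u 0" "v 0" "b * w2 s" "u2 0" "v2 0" "v 1" "v2 1" "u 1" "u2 1"
         "a * w (r+1)" "b * w2 (r+1)" "x r"])
    using a1 a2 E[of 0 0 s] E[of 0 1 s] E[of 1 0 s] E[of 1 1 s]
      E[of 0 0 "r+1"] E[of 0 1 "r+1"] E[of 1 0 "r+1"] E[of 1 1 "r+1"] s r by auto
qed

lemma X2_notS2o:
  assumes "\<exists>t<m-1. y t \<noteq> 0"
  shows "X2 m y \<notin> secant_locus_cone (segre_cone m)"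
proof
  assume "X2 m y \<in> secant_locus_cone (segre_cone m)"
  then obtain a b u v w u2 v2 w2 where X: "X2 m y = (\<lambda>z. a * seg m u v w z + b * seg m u2 v2 w2 z)"
    by (rule S2o_elim)
  have E: "X2 m y (i,j,k) = (a * w k) * u i * v j + (b * w2 k) * u2 i * v2 j"
    if "i<2" "j<2" "k\<le>m" for i j k
    using fun_cong[OF X, of "(i,j,k)"] that by (simp add: seg_val mult_ac)
  define s where "s = (LEAST t. t<m-1 \<and> y t \<noteq> 0)"
  have s: "s < m-1" "y s \<noteq> 0" using LeastI_ex[OF assms] unfolding s_def by auto
  have s2: "y t = 0" if "t < s" for t using not_less_Least[of t "\<lambda>t. t<m-1 \<and> y t \<noteq> 0"] that s(1)
    unfolding s_def by auto
  define r where "r = Max {t. t<m-1 \<and> y t \<noteq> 0}"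
  have fin: "finite {t. t<m-1 \<and> y t \<noteq> 0}" by auto
  have r: "r < m-1" "y r \<noteq> 0" using Max_in[OF fin] assms unfolding r_def by auto
  have r2: "y t = 0" if "r < t" "t < m-1" for t
  proof (rule ccontr)
    assume "y t \<noteq> 0"
    then have "t \<le> r" using Max_ge[OF fin, of t] that unfolding r_def by auto
    then show False using that by auto
  qed
  have a1: "X2 m y (0,0,s) = 0" "X2 m y (0,1,s) = 0" "X2 m y (1,0,s) = y s" "X2 m y (1,1,s) = 0"
    using s s2[of "s-2"] unfolding X2_def by auto
  have a2: "X2 m y (0,0,r+2) = y r" "X2 m y (0,1,r+2) = 0" "X2 m y (1,0,r+2) = 0" "X2 m y (1,1,r+2) = - y r"
    using r r2[of "r+2"] unfolding X2_def by auto
  have sm: "s \<le> m" "r+2 \<le> m" using s r by auto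
  show False
    apply (rule wII[where A="a * w s" and ua="u 0" and va="v 0" and B="b * w2 s" and pa="u2 0" and qa="v2 0"
       and vb="v 1" and qb="v2 1" and xs="y s" and ub="u 1" and pb="u2 1"
       and C="a * w (r+2)" and D="b * w2 (r+2)" and xr="y r"])
    using a1 a2 E[of 0 0 s] E[of 0 1 s] E[of 1 0 s] E[of 1 1 s]
      E[of 0 0 "r+2"] E[of 0 1 "r+2"] E[of 1 0 "r+2"] E[of 1 1 "r+2"] s r sm by auto
qed



definition phiA :: "nat \<times> nat \<Rightarrow> complex" where "phiA = (\<lambda>(i,j). if i = 0 \<and> j = 0 \<or> i = 1 \<and> j = 1 then 1/2 else 0)"
definition phiB :: "nat \<times> nat \<Rightarrow> complex" where "phiB = (\<lambda>(i,j). if i = 0 \<and> j = 1 then 1 else 0)"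
definition phiC :: "nat \<times> nat \<Rightarrow> complex" where "phiC = (\<lambda>(i,j). if i = 1 \<and> j = 0 then 1 else 0)"
definition phiD :: "nat \<times> nat \<Rightarrow> complex" where "phiD = (\<lambda>(i,j). if i = 0 \<and> j = 0 then 1/2 else if i = 1 \<and> j = 1 then -1/2 else 0)"

lemma RA: "rho phiA (X1 m x + X2 m y) k = (if k<m then x k else 0)"
  unfolding rho_def phiA_def X1_def X2_def by (auto simp: field_simps)
lemma RB: "rho phiB (X1 m x + X2 m y) k = (if 1\<le>k \<and> k\<le>m then x (k-1) else 0)"
  unfolding rho_def phiB_def X1_def X2_def by auto
lemma RC: "rho phiC (X1 m x + X2 m y) k = (if k<m-1 then y k else 0)"
  unfolding rho_def phiC_def X1_def X2_def by auto
lemma RD: "rho phiD (X1 m x + X2 m y) k = (if 2\<le>k \<and> k\<le>m then y (k-2) else 0)"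
  unfolding rho_def phiD_def X1_def X2_def by (auto simp: field_simps)

lemma mixed:
  assumes "\<exists>t<m. x t \<noteq> 0" "\<exists>t<m-1. y t \<noteq> 0"
  shows "\<exists>P\<in>polyfun. (\<forall>s\<in>secant_locus_cone (segre_cone m). P s = 0) \<and> P (X1 m x + X2 m y) \<noteq> 0"
proof -
  define r where "r = Max {t. t<m \<and> x t \<noteq> 0}"
  have fin: "finite {t. t<m \<and> x t \<noteq> 0}" by auto
  have r: "r < m" "x r \<noteq> 0" using Max_in[OF fin] assms unfolding r_def by auto
  have r2: "x t = 0" if "r < t" "t < m" for t
  proof (rule ccontr)
    assume "x t \<noteq> 0"
    then have "t \<le> r" using Max_ge[OF fin, of t] that unfolding r_def by auto
    then show False using that by auto
  qed
  define q where "q = Max {t. t<m-1 \<and> y t \<noteq> 0}"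
  have finq: "finite {t. t<m-1 \<and> y t \<noteq> 0}" by auto
  have q: "q < m-1" "y q \<noteq> 0" using Max_in[OF finq] assms unfolding q_def by auto
  have q2: "y t = 0" if "q < t" "t < m-1" for t
  proof (rule ccontr)
    assume "y t \<noteq> 0"
    then have "t \<le> q" using Max_ge[OF finq, of t] that unfolding q_def by auto
    then show False using that by auto
  qed
  let ?T = "X1 m x + X2 m y"
  have zA: "rho phiA ?T k = 0" if "k > r" for k using r2[of k] that unfolding RA by auto
  have zB: "rho phiB ?T k = 0" if "k > r+1" for k using r2[of "k-1"] that unfolding RB by auto
  have zC: "rho phiC ?T k = 0" if "k > q" for k using q2[of k] that unfolding RC by auto
  have zD: "rho phiD ?T k = 0" if "k > q+2" for k using q2[of "k-2"] that unfolding RD by auto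
  show ?thesis
  proof (cases "q \<noteq> r \<and> q \<noteq> r+1")
    case True
    have "minorp phiA phiB phiC r (r+1) q ?T = rho phiA ?T r * rho phiB ?T (r+1) * rho phiC ?T q"
      unfolding minorp_def using True by (intro det3_tri zA zB zC) auto
    also have "\<dots> = x r * x r * y q" using r q unfolding RA RB RC by auto
    finally have "minorp phiA phiB phiC r (r+1) q ?T \<noteq> 0" using r q by auto
    moreover have "\<forall>s\<in>secant_locus_cone (segre_cone m). minorp phiA phiB phiC r (r+1) q s = 0"
      using r q by (intro ballI minorp_S2o) auto
    ultimately show ?thesis using minorp_poly by blast
  next
    case False
    have "minorp phiA phiB phiD r (r+1) (q+2) ?T = rho phiA ?T r * rho phiB ?T (r+1) * rho phiD ?T (q+2)"
      unfolding minorp_def using False by (intro det3_tri zA zB zD) auto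
    also have "\<dots> = x r * x r * y q" using r q unfolding RA RB RD by auto
    finally have "minorp phiA phiB phiD r (r+1) (q+2) ?T \<noteq> 0" using r q by auto
    moreover have "\<forall>s\<in>secant_locus_cone (segre_cone m). minorp phiA phiB phiD r (r+1) (q+2) s = 0"
      using r q by (intro ballI minorp_S2o) auto
    ultimately show ?thesis using minorp_poly by blast
  qed
qed

lemma X1_add: "X1 m x + X1 m x' = X1 m (\<lambda>t. x t + x' t)"
  unfolding X1_def by (auto simp: fun_eq_iff)
lemma X2_add: "X2 m y + X2 m y' = X2 m (\<lambda>t. y t + y' t)"
  unfolding X2_def by (auto simp: fun_eq_iff)
lemma X1_scale: "tscale c (X1 m x) = X1 m (\<lambda>t. c * x t)"
  unfolding X1_def tscale_def by (auto simp: fun_eq_iff)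
lemma X2_scale: "tscale c (X2 m y) = X2 m (\<lambda>t. c * y t)"
  unfolding X2_def tscale_def by (auto simp: fun_eq_iff)
lemma tscale_add: "tscale c (A + B) = tscale c A + tscale c B"
  unfolding tscale_def by (auto simp: fun_eq_iff algebra_simps)

definition LL :: "nat \<Rightarrow> tensor set" where "LL m = {X1 m x + X2 m y | x y. True}"

lemma LL_sub: "csubspace (LL m)"
proof (rule T.subspaceI)
  have "0 = X1 m (\<lambda>_. 0) + X2 m (\<lambda>_. 0)" by (simp add: X1_zero X2_zero)
  then show "0 \<in> LL m" unfolding LL_def by blast
next
  fix A B assume "A \<in> LL m" "B \<in> LL m"
  then obtain x y x' y' where "A = X1 m x + X2 m y" "B = X1 m x' + X2 m y'" unfolding LL_def by auto
  then have "A + B = X1 m (\<lambda>t. x t + x' t) + X2 m (\<lambda>t. y t + y' t)"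
    by (simp add: X1_add[symmetric] X2_add[symmetric] algebra_simps)
  then show "A + B \<in> LL m" unfolding LL_def by blast
next
  fix c A assume "A \<in> LL m"
  then obtain x y where "A = X1 m x + X2 m y" unfolding LL_def by auto
  then have "tscale c A = X1 m (\<lambda>t. c * x t) + X2 m (\<lambda>t. c * y t)"
    by (simp add: tscale_add X1_scale X2_scale)
  then show "tscale c A \<in> LL m" unfolding LL_def by blast
qed

lemma L1_sub: "csubspace (range (X1 m))"
proof (rule T.subspaceI)
  show "0 \<in> range (X1 m)" using X1_zero[of m "\<lambda>_. 0"] by force
next
  fix A B assume "A \<in> range (X1 m)" "B \<in> range (X1 m)"
  then show "A + B \<in> range (X1 m)" using X1_add by auto
next
  fix c A assume "A \<in> range (X1 m)"
  then show "tscale c A \<in> range (X1 m)" using X1_scale by auto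
qed

lemma L2_sub: "csubspace (range (X2 m))"
proof (rule T.subspaceI)
  show "0 \<in> range (X2 m)" using X2_zero[of m "\<lambda>_. 0"] by force
next
  fix A B assume "A \<in> range (X2 m)" "B \<in> range (X2 m)"
  then show "A + B \<in> range (X2 m)" using X2_add by auto
next
  fix c A assume "A \<in> range (X2 m)"
  then show "tscale c A \<in> range (X2 m)" using X2_scale by auto
qed

lemma indep_dual:
  assumes "\<And>b. b \<in> B \<Longrightarrow> \<exists>z. b z \<noteq> 0 \<and> (\<forall>b'\<in>B. b' \<noteq> b \<longrightarrow> b' z = 0)"
  shows "T.independent B"
  unfolding T.independent_explicit_module
proof (intro allI impI)
  fix t u v assume t: "finite t" "t \<subseteq> B" and s: "(\<Sum>v\<in>t. tscale (u v) v) = 0" and v: "v \<in> t"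
  obtain z where z: "v z \<noteq> 0" "\<forall>b'\<in>B. b' \<noteq> v \<longrightarrow> b' z = 0" using assms v t by blast
  have "0 = (\<Sum>w\<in>t. tscale (u w) w) z" using s by simp
  also have "\<dots> = (\<Sum>w\<in>t. u w * w z)" by (simp add: sum_fun_app tscale_def)
  also have "\<dots> = u v * v z + (\<Sum>w\<in>t-{v}. u w * w z)" using t v by (simp add: sum.remove)
  also have "(\<Sum>w\<in>t-{v}. u w * w z) = 0" using z t by (intro sum.neutral) auto
  finally show "u v = 0" using z by simp
qed

definition dl :: "nat \<Rightarrow> nat \<Rightarrow> complex" where "dl t = (\<lambda>s. if s = t then 1 else 0)"

lemma X1_cong: "(\<And>t. t<m \<Longrightarrow> x t = x' t) \<Longrightarrow> X1 m x = X1 m x'"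
  unfolding X1_def by (auto simp: fun_eq_iff)
lemma X2_cong: "(\<And>t. t<m-1 \<Longrightarrow> y t = y' t) \<Longrightarrow> X2 m y = X2 m y'"
  unfolding X2_def by (auto simp: fun_eq_iff)

lemma X1_lin: "finite F \<Longrightarrow> X1 m (\<lambda>s. \<Sum>t\<in>F. c t * dl t s) = (\<Sum>t\<in>F. tscale (c t) (X1 m (dl t)))"
proof (induction F rule: finite_induct)
  case empty then show ?case by (simp add: X1_zero)
next
  case (insert a F)
  have "X1 m (\<lambda>s. \<Sum>t\<in>insert a F. c t * dl t s) = X1 m (\<lambda>s. c a * dl a s) + X1 m (\<lambda>s. \<Sum>t\<in>F. c t * dl t s)"
    using insert(1,2) by (simp add: X1_add)
  then show ?case using insert by (simp add: X1_scale)
qed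

lemma X2_lin: "finite F \<Longrightarrow> X2 m (\<lambda>s. \<Sum>t\<in>F. c t * dl t s) = (\<Sum>t\<in>F. tscale (c t) (X2 m (dl t)))"
proof (induction F rule: finite_induct)
  case empty then show ?case by (simp add: X2_zero)
next
  case (insert a F)
  have "X2 m (\<lambda>s. \<Sum>t\<in>insert a F. c t * dl t s) = X2 m (\<lambda>s. c a * dl a s) + X2 m (\<lambda>s. \<Sum>t\<in>F. c t * dl t s)"
    using insert(1,2) by (simp add: X2_add)
  then show ?case using insert by (simp add: X2_scale)
qed

lemma sum_dl: "t \<in> A \<Longrightarrow> finite A \<Longrightarrow> (\<Sum>ta\<in>A. f ta * (if t = ta then 1 else 0)) = (f t :: complex)"
proof -
  assume "t \<in> A" "finite A"
  have "(\<Sum>ta\<in>A. f ta * (if t = ta then 1 else 0)) = (\<Sum>ta\<in>A. if t = ta then f ta else 0)"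
    by (intro sum.cong) auto
  then show ?thesis using \<open>t \<in> A\<close> \<open>finite A\<close> by simp
qed

lemma X1_sum: "X1 m x = (\<Sum>t<m. tscale (x t) (X1 m (dl t)))"
proof -
  have "X1 m x = X1 m (\<lambda>s. \<Sum>t<m. x t * dl t s)"
    by (rule X1_cong) (simp add: dl_def sum_dl)
  then show ?thesis by (simp add: X1_lin)
qed

lemma X2_sum: "X2 m y = (\<Sum>t<m-1. tscale (y t) (X2 m (dl t)))"
proof -
  have "X2 m y = X2 m (\<lambda>s. \<Sum>t<m-1. y t * dl t s)"
    by (rule X2_cong) (simp add: dl_def sum_dl)
  then show ?thesis by (simp add: X2_lin)
qed



lemma ev1: "t' < m \<Longrightarrow> X1 m x (0, Suc 0, Suc t') = x t'" unfolding X1_def by auto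
lemma ev2: "X2 m y (0,Suc 0,k) = 0" unfolding X2_def by auto
lemma ev3: "t' < m-1 \<Longrightarrow> X2 m y (Suc 0,0,t') = y t'" unfolding X2_def by auto
lemma ev4: "X1 m x (Suc 0,0,k) = 0" unfolding X1_def by auto

definition BL :: "nat \<Rightarrow> tensor set" where
  "BL m = (\<lambda>t. X1 m (dl t)) ` {..<m} \<union> (\<lambda>t. X2 m (dl t)) ` {..<m-1}"

lemma BL_indep: "T.independent (BL m)"
proof (rule indep_dual)
  fix b assume "b \<in> BL m"
  then consider t where "t < m" "b = X1 m (dl t)" | t where "t < m-1" "b = X2 m (dl t)"
    unfolding BL_def by auto
  then show "\<exists>z. b z \<noteq> 0 \<and> (\<forall>b'\<in>BL m. b' \<noteq> b \<longrightarrow> b' z = 0)"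
  proof cases
    case 1
    show ?thesis
    proof (intro exI[of _ "(0,Suc 0,Suc t)"] conjI ballI impI)
      show "b (0,Suc 0,Suc t) \<noteq> 0" using 1 ev1 by (simp add: dl_def)
      fix b' assume "b' \<in> BL m" "b' \<noteq> b"
      then show "b' (0,Suc 0,Suc t) = 0" unfolding BL_def using 1 by (auto simp: ev1 ev2 dl_def)
    qed
  next
    case 2
    show ?thesis
    proof (intro exI[of _ "(Suc 0,0,t)"] conjI ballI impI)
      show "b (Suc 0,0,t) \<noteq> 0" using 2 ev3 by (simp add: dl_def)
      fix b' assume "b' \<in> BL m" "b' \<noteq> b"
      then show "b' (Suc 0,0,t) = 0" unfolding BL_def using 2 by (auto simp: ev3 ev4 dl_def)
    qed
  qed
qed

lemma BL_card: "card (BL m) = m + (m-1)"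
proof -
  have i1: "inj_on (\<lambda>t. X1 m (dl t)) {..<m}"
  proof (rule inj_onI)
    fix t t' assume "t \<in> {..<m}" "t' \<in> {..<m}" "X1 m (dl t) = X1 m (dl t')"
    then have "X1 m (dl t) (0,Suc 0,Suc t) = X1 m (dl t') (0,Suc 0,Suc t)" by simp
    then show "t = t'" using \<open>t \<in> {..<m}\<close> by (simp add: ev1 dl_def split: if_splits)
  qed
  have i2: "inj_on (\<lambda>t. X2 m (dl t)) {..<m-1}"
  proof (rule inj_onI)
    fix t t' assume "t \<in> {..<m-1}" "t' \<in> {..<m-1}" "X2 m (dl t) = X2 m (dl t')"
    then have "X2 m (dl t) (Suc 0,0,t) = X2 m (dl t') (Suc 0,0,t)" by simp
    then show "t = t'" using \<open>t \<in> {..<m-1}\<close> by (simp add: ev3 dl_def split: if_splits)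
  qed
  have d: "(\<lambda>t. X1 m (dl t)) ` {..<m} \<inter> (\<lambda>t. X2 m (dl t)) ` {..<m-1} = {}"
  proof (rule ccontr)
    assume "\<not> ?thesis"
    then obtain t t' where "t < m" "X1 m (dl t) = X2 m (dl t')" by auto
    then have "X1 m (dl t) (0,Suc 0,Suc t) = X2 m (dl t') (0,Suc 0,Suc t)" by simp
    then show False using \<open>t < m\<close> by (simp add: ev1 ev2 dl_def)
  qed
  show ?thesis unfolding BL_def
    by (subst card_Un_disjoint) (use d i1 i2 in \<open>auto simp: card_image\<close>)
qed

lemma LL_span: "cspan (BL m) = LL m"
proof (rule T.span_subspace)
  have z: "X2 m (\<lambda>_. 0) = 0" "X1 m (\<lambda>_. 0) = 0" by (simp_all add: X1_zero X2_zero)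
  show "BL m \<subseteq> LL m" unfolding BL_def LL_def
  proof safe
    fix t show "\<exists>x y. X1 m (dl t) = X1 m x + X2 m y \<and> True" using z by (intro exI[of _ "dl t"] exI[of _ "\<lambda>_. 0"]) simp
  next
    fix t show "\<exists>x y. X2 m (dl t) = X1 m x + X2 m y \<and> True" using z by (intro exI[of _ "\<lambda>_. 0"] exI[of _ "dl t"]) simp
  qed
  show "LL m \<subseteq> cspan (BL m)"
  proof
    fix A assume "A \<in> LL m"
    then obtain x y where A: "A = X1 m x + X2 m y" unfolding LL_def by auto
    have "X1 m x \<in> cspan (BL m)" unfolding X1_sum[of m x]
      by (intro T.span_sum T.span_scale T.span_base) (auto simp: BL_def)
    moreover have "X2 m y \<in> cspan (BL m)" unfolding X2_sum[of m y]
      by (intro T.span_sum T.span_scale T.span_base) (auto simp: BL_def)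
    ultimately show "A \<in> cspan (BL m)" unfolding A by (rule T.span_add)
  qed
  show "csubspace (LL m)" by (rule LL_sub)
qed

lemma LL_dim: "cdim (LL m) = m + (m-1)"
proof -
  have "cdim (LL m) = card (BL m)"
  proof -
    have sp: "cspan (LL m) = LL m" using LL_sub[of m] by simp
    show ?thesis by (rule T.dim_eq_card) (simp_all add: sp LL_span BL_indep)
  qed
  then show ?thesis using BL_card by simp
qed

definition EV :: "nat \<Rightarrow> tensor set" where
  "EV m = (\<lambda>p. (\<lambda>q. if q = p then 1 else 0)) ` ({..<2} \<times> {..<2} \<times> {..m})"

lemma tspace_sub: "csubspace (tspace m)"
  by (rule T.subspaceI) (auto simp: tspace_def tscale_def)

lemma EV_indep: "T.independent (EV m)"
proof (rule indep_dual)
  fix b assume "b \<in> EV m"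
  then obtain p where p: "b = (\<lambda>q. if q = p then 1 else 0)" unfolding EV_def by auto
  show "\<exists>z. b z \<noteq> 0 \<and> (\<forall>b'\<in>EV m. b' \<noteq> b \<longrightarrow> b' z = 0)"
    by (intro exI[of _ p]) (auto simp: p EV_def)
qed

lemma EV_card: "card (EV m) = 2 * 2 * (m+1)"
proof -
  have "inj_on (\<lambda>p. (\<lambda>q. if q = p then (1::complex) else 0)) ({..<2::nat} \<times> {..<2::nat} \<times> {..m})"
    by (rule inj_onI) (metis (mono_tags) one_neq_zero)
  then show ?thesis unfolding EV_def by (simp add: card_image card_cartesian_product)
qed

lemma EV_span: "cspan (EV m) = tspace m"
proof (rule T.span_subspace)
  show "EV m \<subseteq> tspace m" unfolding EV_def tspace_def by auto
  show "tspace m \<subseteq> cspan (EV m)"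
  proof
    fix A assume A: "A \<in> tspace m"
    let ?P = "{..<2} \<times> {..<2} \<times> {..m::nat}"
    have "A = (\<Sum>p\<in>?P. tscale (A p) (\<lambda>q. if q = p then 1 else 0))"
    proof
      fix q
      show "A q = (\<Sum>p\<in>?P. tscale (A p) (\<lambda>q. if q = p then 1 else 0)) q"
      proof (cases "q \<in> ?P")
        case True
        then show ?thesis by (simp add: sum_fun_app tscale_def sum_dl)
      next
        case False
        then have "A q = 0" using A unfolding tspace_def by (cases q) auto
        moreover have "(\<Sum>p\<in>?P. tscale (A p) (\<lambda>q. if q = p then 1 else 0)) q = 0"
          unfolding sum_fun_app tscale_def using False by (intro sum.neutral) auto
        ultimately show ?thesis by simp
      qed
    qed
    also have "\<dots> \<in> cspan (EV m)"
      by (intro T.span_sum T.span_scale T.span_base) (auto simp: EV_def)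
    finally show "A \<in> cspan (EV m)" .
  qed
  show "csubspace (tspace m)" by (rule tspace_sub)
qed

lemma V_dim: "cdim (tspace m) = 2 * 2 * (m+1)"
proof -
  have "cdim (tspace m) = card (EV m)"
  proof -
    have sp: "cspan (tspace m) = tspace m" using tspace_sub[of m] by simp
    show ?thesis by (rule T.dim_eq_card) (simp_all add: sp EV_span EV_indep)
  qed
  then show ?thesis using EV_card by simp
qed



lemma LL_tspace: "LL m \<subseteq> tspace m"
  unfolding LL_def using X1_in X2_in by (auto simp: tspace_def)

lemma X1_nz: "X1 m x \<noteq> 0 \<Longrightarrow> \<exists>t<m. x t \<noteq> 0" using X1_zero by blast
lemma X2_nz: "X2 m y \<noteq> 0 \<Longrightarrow> \<exists>t<m-1. y t \<noteq> 0" using X2_zero by blast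

theorem theorem4p7:
  fixes m :: nat
  assumes "0 < m"
  defines "V \<equiv> tspace m"
      and "Y \<equiv> segre_cone m"
  defines "S2o \<equiv> secant_locus_cone Y"
  defines "S2 \<equiv> zariski_closure V S2o"
  shows "\<exists>L L1 L2.
           csubspace L \<and> L \<subseteq> V \<and> cdim L + (2 * m + 5) = cdim V \<and>
           L \<inter> S2o = {0} \<and>
           csubspace L1 \<and> csubspace L2 \<and>
           L \<inter> S2 = L1 \<union> L2 \<and> L1 \<inter> L2 = {0} \<and>
           L1 - {0} \<subseteq> S2 - S2o \<and> L2 - {0} \<subseteq> S2 - S2o \<and>
           cspan (L1 \<union> L2) = L"
proof -
  let ?S2o = "secant_locus_cone (segre_cone m)"
  let ?S2 = "zariski_closure (tspace m) ?S2o"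
  have z1: "X1 m (\<lambda>_. 0) = 0" and z2: "X2 m (\<lambda>_. 0) = 0" by (simp_all add: X1_zero X2_zero)
  have inL1: "X1 m x \<in> LL m" for x unfolding LL_def using z2 by (metis (mono_tags, lifting) add.right_neutral mem_Collect_eq)
  have inL2: "X2 m y \<in> LL m" for y unfolding LL_def using z1 by (metis (mono_tags, lifting) add.left_neutral mem_Collect_eq)
  have S2_van: "P T = 0" if "T \<in> ?S2" "P \<in> polyfun" "\<forall>s\<in>?S2o. P s = 0" for P T
    using that unfolding zariski_closure_def by blast
  have dim: "cdim (LL m) + (2 * m + 5) = cdim (tspace m)"
    using assms(1) by (simp add: LL_dim V_dim)
  have c1: "LL m \<inter> ?S2o = {0}"
  proof (intro equalityI subsetI)
    fix T :: tensor assume T: "T \<in> LL m \<inter> ?S2o"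
    then obtain x y where Txy: "T = X1 m x + X2 m y" unfolding LL_def by auto
    show "T \<in> {0}"
    proof (cases "\<exists>t<m. x t \<noteq> 0"; cases "\<exists>t<m-1. y t \<noteq> 0")
      assume "\<exists>t<m. x t \<noteq> 0" "\<exists>t<m-1. y t \<noteq> 0"
      then obtain P where "P \<in> polyfun" "\<forall>s\<in>?S2o. P s = 0" "P T \<noteq> 0" using mixed Txy by blast
      then show ?thesis using T by auto
    next
      assume "\<exists>t<m. x t \<noteq> 0" "\<not> (\<exists>t<m-1. y t \<noteq> 0)"
      then have "T = X1 m x" using Txy X2_zero by auto
      then show ?thesis using T X1_notS2o \<open>\<exists>t<m. x t \<noteq> 0\<close> by auto
    next
      assume "\<not> (\<exists>t<m. x t \<noteq> 0)" "\<exists>t<m-1. y t \<noteq> 0"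
      then have "T = X2 m y" using Txy X1_zero by auto
      then show ?thesis using T X2_notS2o \<open>\<exists>t<m-1. y t \<noteq> 0\<close> by auto
    next
      assume "\<not> (\<exists>t<m. x t \<noteq> 0)" "\<not> (\<exists>t<m-1. y t \<noteq> 0)"
      then show ?thesis using Txy X1_zero X2_zero by auto
    qed
  next
    fix T :: tensor assume "T \<in> {0}"
    then show "T \<in> LL m \<inter> ?S2o" using T.subspace_0[OF LL_sub] zero_S2o by auto
  qed
  have c2: "LL m \<inter> ?S2 = range (X1 m) \<union> range (X2 m)"
  proof (intro equalityI subsetI)
    fix T :: tensor assume T: "T \<in> LL m \<inter> ?S2"
    then obtain x y where Txy: "T = X1 m x + X2 m y" unfolding LL_def by auto
    show "T \<in> range (X1 m) \<union> range (X2 m)"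
    proof (cases "\<exists>t<m. x t \<noteq> 0 \<and> (\<exists>t<m-1. y t \<noteq> 0)")
      case True
      then obtain P where "P \<in> polyfun" "\<forall>s\<in>?S2o. P s = 0" "P T \<noteq> 0" using mixed Txy by blast
      moreover have "P T = 0" using T \<open>P \<in> polyfun\<close> \<open>\<forall>s\<in>?S2o. P s = 0\<close> by (intro S2_van) auto
      ultimately show ?thesis by simp
    next
      case False
      then consider "\<not> (\<exists>t<m. x t \<noteq> 0)" | "\<not> (\<exists>t<m-1. y t \<noteq> 0)" by blast
      then have "T = X1 m x \<or> T = X2 m y"
      proof cases
        case 1 then have "X1 m x = 0" by (intro X1_zero) blast
        then show ?thesis using Txy by simp
      next
        case 2 then have "X2 m y = 0" by (intro X2_zero) blast
        then show ?thesis using Txy by simp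
      qed
      then show ?thesis by auto
    qed
  next
    fix T :: tensor assume "T \<in> range (X1 m) \<union> range (X2 m)"
    then show "T \<in> LL m \<inter> ?S2" using inL1 inL2 X1_S2 X2_S2 by auto
  qed
  have c3: "range (X1 m) \<inter> range (X2 m) = {0}"
  proof (intro equalityI subsetI)
    fix T :: tensor assume "T \<in> range (X1 m) \<inter> range (X2 m)"
    then obtain x y where "T = X1 m x" "X1 m x = X2 m y" by auto
    moreover have "\<forall>t<m. x t = 0"
    proof (intro allI impI)
      fix t assume "t < m"
      have "X1 m x (0, Suc 0, Suc t) = X2 m y (0, Suc 0, Suc t)" using \<open>X1 m x = X2 m y\<close> by simp
      then show "x t = 0" using \<open>t < m\<close> by (simp add: ev1 ev2)
    qed
    ultimately show "T \<in> {0}" using X1_zero by auto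
  next
    fix T :: tensor assume "T \<in> {0}"
    then show "T \<in> range (X1 m) \<inter> range (X2 m)" using z1 z2 by (metis IntI rangeI singletonD)
  qed
  have c4: "range (X1 m) - {0} \<subseteq> ?S2 - ?S2o"
    using X1_nz X1_notS2o X1_S2 by auto
  have c5: "range (X2 m) - {0} \<subseteq> ?S2 - ?S2o"
    using X2_nz X2_notS2o X2_S2 by auto
  have c6: "cspan (range (X1 m) \<union> range (X2 m)) = LL m"
  proof (rule T.span_subspace)
    show "range (X1 m) \<union> range (X2 m) \<subseteq> LL m" using inL1 inL2 by auto
    show "LL m \<subseteq> cspan (range (X1 m) \<union> range (X2 m))"
    proof
      fix A assume "A \<in> LL m"
      then obtain x y where A: "A = X1 m x + X2 m y" unfolding LL_def by auto
      have "X1 m x \<in> cspan (range (X1 m) \<union> range (X2 m))" by (rule T.span_base) auto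
      moreover have "X2 m y \<in> cspan (range (X1 m) \<union> range (X2 m))" by (rule T.span_base) auto
      ultimately show "A \<in> cspan (range (X1 m) \<union> range (X2 m))" unfolding A by (rule T.span_add)
    qed
    show "csubspace (LL m)" by (rule LL_sub)
  qed
  show ?thesis unfolding S2_def S2o_def Y_def V_def
    by (intro exI[of _ "LL m"] exI[of _ "range (X1 m)"] exI[of _ "range (X2 m)"] conjI
        LL_sub LL_tspace dim c1 L1_sub L2_sub c2 c3 c4 c5 c6)
qed

end
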